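(* For every $n\ge1$, the number of permutations $\pi$ of $\{1,\dots,n\}$ whose Schröder insertion tableau $P(\pi)$ consists of a single row is $2^{\lfloor n/2\rfloor}$.
   Context: A Schröder tableau consists of rows $1,2,\dots$; row $r$ has $\lambda_r$ cells at positions $1,\dots,\lambda_r$, each filled with a number. Cells at odd positions are upper triangles, cells at even positions are lower triangles. The Schröder insertion tableau $P(\pi)$ of $\pi=\pi_1\cdots\pi_n$ is built as follows. Start with $P$ having one row containing $\pi_1$. For $k=2,\dots,n$, insert $\alpha=\pi_k$ into row $i=1$ by the rule: if row $i$ is empty or $\alpha$ is larger than all its entries, place $\alpha$ in a new cell at the end of row $i$ and stop. Otherwise let $j$ be the position in row $i$ of the smallest entry larger than $\alpha$. If $j$ is even: remove the entry $\beta$ at position $j$, write $\alpha$ there, and insert $\beta$ into row $i+1$ by the same rule. If $j$ is odd and position $j+1$ exists in row $i$ with entry $\beta$: move the entry of position $j$ to position $j+1$, write $\alpha$ at position $j$, and insert $\beta$ into row $i+1$. If $j$ is odd and is the last position of row $i$: move the entry of position $j$ into a new cell at position $j+1$ at the end of row $i$, write $\alpha$ at position $j$, and stop. The final $P$ is $P(\pi)$. *)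

theory Defs
  imports Main
begin

text \<open>Row positions are 1-based in the paper; list index k corresponds to position k+1.
  Thus position j is odd iff the list index j-1 is even.\<close>

fun sch_insert :: "nat \<Rightarrow> nat list list \<Rightarrow> nat list list" where
  "sch_insert a [] = [[a]]"
| "sch_insert a (r # rs) =
     (if \<forall>x\<in>set r. x < a then (r @ [a]) # rs
      else
        (let m = Min {x \<in> set r. a < x};
             k = (LEAST k. k < length r \<and> r ! k = m)
         in if odd k then
              \<comment> \<open>position k+1 is even\<close>
              (r[k := a]) # sch_insert (r ! k) rs
            else if Suc k < length r then
              \<comment> \<open>position k+1 odd, position k+2 exists\<close>
              (r[k := a, Suc k := r ! k]) # sch_insert (r ! Suc k) rs
            else
              \<comment> \<open>position k+1 odd and last\<close>
              (r[k := a] @ [r ! k]) # rs))"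

definition sch_P :: "nat list \<Rightarrow> nat list list" where
  "sch_P pi = foldl (\<lambda>T a. sch_insert a T) [[hd pi]] (tl pi)"

end

theory Submission imports Defs begin

lemma ins1:
  assumes s: "sorted_wrt (<) r" and ne: "r \<noteq> []" and an: "a \<notin> set r"
  shows "(length (sch_insert a [r]) = 1 \<longleftrightarrow> (card {x\<in>set r. a<x} = 0 \<or> (card {x\<in>set r. a<x} = 1 \<and> odd (length r))))
    \<and> (length (sch_insert a [r]) = 1 \<longrightarrow> (\<exists>r'. sch_insert a [r] = [r'] \<and> sorted_wrt (<) r' \<and> set r' = insert a (set r)))"
proof (cases "\<forall>x\<in>set r. x < a")
  case True
  then have "{x\<in>set r. a<x} = {}" by auto
  with True show ?thesis using s by (auto simp: sorted_wrt_append)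
next
  case False
  define A where "A = {x \<in> set r. a < x}"
  have Ane: "A \<noteq> {}" using False an A_def by (auto simp: not_less order.order_iff_strict)
  have Afin: "finite A" by (simp add: A_def)
  define m where "m = Min A"
  have mA: "m \<in> A" using Ane Afin m_def by simp
  have mmin: "\<And>x. x \<in> A \<Longrightarrow> m \<le> x" using Afin m_def by simp
  have dist: "distinct r" using s by (simp add: strict_sorted_iff)
  define k where "k = (LEAST k. k < length r \<and> r ! k = m)"
  have ex: "\<exists>k. k < length r \<and> r ! k = m" using mA A_def by (auto simp: in_set_conv_nth)
  have kl: "k < length r" and rk: "r ! k = m" using LeastI_ex[OF ex] k_def by auto
  have below: "\<And>i. i < k \<Longrightarrow> r ! i < a"
  proof -
    fix i assume "i < k"
    then have "r ! i < r ! k" using s kl by (simp add: sorted_wrt_iff_nth_less)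
    moreover have "r ! i \<noteq> a" using an \<open>i<k\<close> kl by (metis nth_mem order.strict_trans)
    moreover have "r ! i \<in> set r" using \<open>i<k\<close> kl by simp
    ultimately show "r ! i < a" using mmin rk A_def by (metis (mono_tags, lifting) leD linorder_neqE mem_Collect_eq)
  qed
  have above: "\<And>i. k \<le> i \<Longrightarrow> i < length r \<Longrightarrow> a < r ! i"
  proof -
    fix i assume "k \<le> i" "i < length r"
    then have "r ! k \<le> r ! i" using s by (metis order.order_iff_strict sorted_wrt_iff_nth_less)
    then show "a < r ! i" using mA rk A_def by auto
  qed
  have Aeq: "A = set (drop k r)"
  proof
    show "A \<subseteq> set (drop k r)"
    proof
      fix x assume "x \<in> A"
      then obtain i where i: "i < length r" "r ! i = x" "a < x" using A_def by (auto simp: in_set_conv_nth)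
      then have "k \<le> i" using below by (meson not_le order.asym)
      then have "drop k r ! (i-k) = x" using i \<open>k \<le> i\<close> by simp
      moreover have "i - k < length (drop k r)" using i \<open>k \<le> i\<close> by simp
      ultimately show "x \<in> set (drop k r)" by (metis nth_mem)
    qed
  next
    show "set (drop k r) \<subseteq> A"
    proof
      fix x assume "x \<in> set (drop k r)"
      then obtain j where j: "j < length r - k" "drop k r ! j = x" by (auto simp: in_set_conv_nth)
      then have "x = r ! (k + j)" "k + j < length r" by auto
      then show "x \<in> A" using above A_def by auto
    qed
  qed
  have cA: "card A = length r - k" using Aeq dist by (simp add: distinct_card)
  have eqs: "sch_insert a [r] = (if odd k then [r[k := a], [r ! k]]
     else if Suc k < length r then [r[k := a, Suc k := r ! k], [r ! Suc k]]
     else [r[k := a] @ [r ! k]])"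
    by (subst sch_insert.simps, simp only: if_not_P[OF False] Let_def A_def[symmetric] m_def[symmetric] k_def[symmetric], simp)
  show ?thesis
  proof (cases "odd k")
    case True
    have l2: "length (sch_insert a [r]) = 2" using eqs True by simp
    have "length r = k + card A" "card A \<ge> 1" using cA kl by auto
    then have "\<not> (card A = 0 \<or> (card A = 1 \<and> odd (length r)))" using True by auto
    then show ?thesis using l2 A_def by simp
  next
    case ev: False
    show ?thesis
    proof (cases "Suc k < length r")
      case True
      have l2: "length (sch_insert a [r]) = 2" using eqs True ev by simp
      have "\<not> (card A = 0 \<or> (card A = 1 \<and> odd (length r)))" using True cA by auto
      then show ?thesis using l2 A_def by simp
    next
      case False
      then have kk: "Suc k = length r" using kl by simp
      have dk: "drop k r = [m]" using kk rk by (metis Cons_nth_drop_Suc drop_all order_refl kl)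
      have rr: "r = take k r @ [m]" using dk by (metis append_take_drop_id)
      have "(take k r @ [m])[k := a] = take k r @ [a]" using kl by (simp add: list_update_append)
      then have rka: "r[k := a] = take k r @ [a]" using rr by metis
      have am: "a < m" using mA A_def by simp
      have tk: "\<forall>x\<in>set (take k r). x < a" using below kl by (auto simp: in_set_conv_nth)
      have st: "sorted_wrt (<) (take k r)" using s by (simp add: sorted_wrt_take)
      have sr: "sorted_wrt (<) (take k r @ [a, m])" using st tk am by (auto simp: sorted_wrt_append)
      have setr: "set (take k r @ [a, m]) = insert a (set r)" using rr by (metis insert_commute list.simps(15) set_append Un_insert_right)
      have res: "sch_insert a [r] = [take k r @ [a, m]]" using eqs ev False rka rk by simp
      have "card A = 1" using cA kk by auto
      have "odd (length r)" using kk ev by (metis even_Suc)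
      then show ?thesis unfolding res A_def[symmetric] using sr setr \<open>card A = 1\<close> by simp
    qed
  qed
qed

lemma ins_ne: "sch_insert a T \<noteq> []"
  by (cases T) (auto simp: Let_def)

lemma len_mono: "length T \<ge> 2 \<Longrightarrow> length (sch_insert a T) \<ge> 2"
proof (cases T)
  case (Cons r rs)
  assume "length T \<ge> 2"
  then have "rs \<noteq> []" using Cons by auto
  then show ?thesis using Cons ins_ne[of _ rs] by (auto simp: Let_def Suc_le_eq)
qed simp

lemma foldl_ne: "T \<noteq> [] \<Longrightarrow> foldl (\<lambda>T a. sch_insert a T) T ys \<noteq> []"
  by (induction ys arbitrary: T) (auto simp: ins_ne)

lemma sch_P_ne: "sch_P xs \<noteq> []"
  unfolding sch_P_def by (rule foldl_ne) simp

lemma sch_P_snoc: "xs \<noteq> [] \<Longrightarrow> sch_P (xs @ [a]) = sch_insert a (sch_P xs)"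
  unfolding sch_P_def by (cases xs) auto

lemma sch_P_single: "sch_P [s] = [[s]]" by (simp add: sch_P_def)

lemma one_row_sorted:
  "distinct xs \<Longrightarrow> xs \<noteq> [] \<Longrightarrow> length (sch_P xs) = 1 \<Longrightarrow>
     \<exists>r. sch_P xs = [r] \<and> sorted_wrt (<) r \<and> set r = set xs"
proof (induction xs rule: rev_induct)
  case Nil then show ?case by simp
next
  case (snoc a xs)
  show ?case
  proof (cases "xs = []")
    case True then show ?thesis by (simp add: sch_P_single)
  next
    case False
    have e: "sch_P (xs @ [a]) = sch_insert a (sch_P xs)" using False by (rule sch_P_snoc)
    have "length (sch_P xs) = 1"
    proof (rule ccontr)
      assume "length (sch_P xs) \<noteq> 1"
      then have "length (sch_P xs) \<ge> 2" using sch_P_ne[of xs] by (cases "sch_P xs") (auto simp: Suc_le_eq)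
      then have "length (sch_P (xs @ [a])) \<ge> 2" using e len_mono by simp
      then show False using snoc.prems by simp
    qed
    then obtain r where r: "sch_P xs = [r]" "sorted_wrt (<) r" "set r = set xs"
      using snoc False by auto
    have rn: "r \<noteq> []" using r False by auto
    have an: "a \<notin> set r" using r snoc.prems by simp
    have "length (sch_insert a [r]) = 1" using snoc.prems e r by simp
    then obtain r' where "sch_insert a [r] = [r']" "sorted_wrt (<) r'" "set r' = insert a (set r)"
      using ins1[OF r(2) rn an] by blast
    then show ?thesis using e r by auto
  qed
qed

lemma charac:
  assumes d: "distinct (xs @ [a])" and ne: "xs \<noteq> []"
  shows "length (sch_P (xs @ [a])) = 1 \<longleftrightarrow> length (sch_P xs) = 1 \<and>
     (card {x\<in>set xs. a<x} = 0 \<or> (card {x\<in>set xs. a<x} = 1 \<and> odd (length xs)))"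
proof -
  have e: "sch_P (xs @ [a]) = sch_insert a (sch_P xs)" using ne by (rule sch_P_snoc)
  show ?thesis
  proof (cases "length (sch_P xs) = 1")
    case True
    then obtain r where r: "sch_P xs = [r]" "sorted_wrt (<) r" "set r = set xs"
      using one_row_sorted d ne by auto
    have rn: "r \<noteq> []" using r ne by auto
    have an: "a \<notin> set r" using r d by simp
    have lr: "length r = length xs" using r d
      by (metis distinct_append distinct_card strict_sorted_iff)
    show ?thesis using ins1[OF r(2) rn an] e r True lr by simp
  next
    case False
    then have "length (sch_P xs) \<ge> 2" using sch_P_ne[of xs] by (cases "sch_P xs") (auto simp: Suc_le_eq)
    then have "length (sch_P (xs @ [a])) \<ge> 2" using e len_mono by simp
    then show ?thesis using False by simp
  qed
qed


definition G :: "nat set \<Rightarrow> nat list set" where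
  "G S = {pi. distinct pi \<and> set pi = S \<and> length (sch_P pi) = 1}"

lemma G_finite: "finite S \<Longrightarrow> finite (G S)"
proof -
  assume f: "finite S"
  have "G S \<subseteq> {xs. set xs \<subseteq> S \<and> length xs \<le> card S}"
    unfolding G_def by (auto simp: distinct_card[symmetric])
  then show ?thesis using finite_lists_length_le[OF f] finite_subset by blast
qed

lemma rank0: "finite (S::nat set) \<Longrightarrow> a \<in> S \<Longrightarrow> card {x\<in>S. a<x} = 0 \<Longrightarrow> a = Max S"
  by (rule Max_eqI[symmetric]) (auto simp: not_less)

lemma rank1:
  assumes f: "finite (S::nat set)" and aS: "a \<in> S" and c: "card {x\<in>S. a<x} = 1"
  shows "a = Max (S - {Max S})"
proof -
  obtain b where B: "{x\<in>S. a<x} = {b}" using c by (auto simp: card_Suc_eq)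
  have "b \<in> S" "a < b" using B by auto
  have "Max S \<in> S" using f \<open>b \<in> S\<close> by (intro Max_in) auto
  moreover have "b \<le> Max S" using f \<open>b \<in> S\<close> by simp
  ultimately have "a < Max S" "Max S \<in> S" using \<open>a < b\<close> by auto
  then have "Max S \<in> {x\<in>S. a<x}" by simp
  then have bM: "b = Max S" unfolding B by simp
  show ?thesis
  proof (rule Max_eqI[symmetric])
    show "finite (S - {Max S})" using f by simp
    show "a \<in> S - {Max S}" using aS \<open>a < Max S\<close> by auto
    fix y assume "y \<in> S - {Max S}"
    then show "y \<le> a" using B bM by (metis (mono_tags, lifting) DiffE insertI1 mem_Collect_eq not_le singletonD)
  qed
qed

lemma cnt: "finite S \<Longrightarrow> card S = n \<Longrightarrow> n \<ge> 1 \<Longrightarrow> card (G S) = 2 ^ (n div 2)"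
proof (induction n arbitrary: S)
  case 0 then show ?case by simp
next
  case (Suc n)
  show ?case
  proof (cases "n = 0")
    case True
    then obtain s where S: "S = {s}" using Suc.prems by (auto simp: card_Suc_eq)
    have "G S = {[s]}"
    proof
      show "{[s]} \<subseteq> G S" using S by (simp add: G_def sch_P_single)
      show "G S \<subseteq> {[s]}"
      proof
        fix pi assume "pi \<in> G S"
        then have "distinct pi" "set pi = {s}" by (auto simp: G_def S)
        then have "length pi = 1" by (metis One_nat_def card.empty card_insert_disjoint distinct_card empty_iff finite.emptyI)
        then obtain x where "pi = [x]" by (metis One_nat_def length_0_conv length_Suc_conv)
        then show "pi \<in> {[s]}" using \<open>set pi = {s}\<close> by simp
      qed
    qed
    then show ?thesis using True by simp
  next
    case False
    define M where "M = Max S"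
    define S' where "S' = S - {M}"
    define m2 where "m2 = Max S'"
    define S'' where "S'' = S - {m2}"
    have fS: "finite S" using Suc.prems by simp
    have Sne: "S \<noteq> {}" using Suc.prems by auto
    have MS: "M \<in> S" using fS Sne M_def by simp
    have cS': "card S' = n" using Suc.prems MS S'_def by simp
    have S'ne: "S' \<noteq> {}" using cS' False by auto
    have m2S': "m2 \<in> S'" unfolding m2_def by (rule Max_in) (use fS S'_def S'ne in auto)
    have m2S: "m2 \<in> S" and m2M: "m2 \<noteq> M" using m2S' S'_def by auto
    have m2le: "m2 < M" using m2S m2M fS M_def by (simp add: order.not_eq_order_implies_strict)
    have cS'': "card S'' = n" using Suc.prems m2S S''_def by simp
    have IH1: "card (G S') = 2 ^ (n div 2)" using Suc.IH[of S'] cS' False fS S'_def by simp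
    have IH2: "card (G S'') = 2 ^ (n div 2)" using Suc.IH[of S''] cS'' False fS S''_def by simp
    have above_m2: "{x\<in>S''. m2 < x} = {M}"
    proof -
      have "\<And>x. x \<in> S'' \<Longrightarrow> m2 < x \<Longrightarrow> x = M"
      proof (rule ccontr)
        fix x assume "x \<in> S''" "m2 < x" "x \<noteq> M"
        then have "x \<in> S'" using S''_def S'_def by auto
        then have "x \<le> m2" using fS S'_def m2_def by simp
        then show False using \<open>m2 < x\<close> by simp
      qed
      moreover have "M \<in> S''" using MS m2M S''_def by auto
      ultimately show ?thesis using m2le by blast
    qed
    have leM: "\<And>x. x \<in> S \<Longrightarrow> x \<le> M" using fS M_def by simp
    have above_M: "{x\<in>S'. M < x} = {}" using leM unfolding S'_def by (auto simp: not_less)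
    define I1 where "I1 = (\<lambda>xs. xs @ [M]) ` G S'"
    define I2 where "I2 = (if odd n then (\<lambda>xs. xs @ [m2]) ` G S'' else {})"
    have eq: "G S = I1 \<union> I2"
    proof
      show "G S \<subseteq> I1 \<union> I2"
      proof
        fix pi assume pi: "pi \<in> G S"
        then have d: "distinct pi" and sp: "set pi = S" and l1: "length (sch_P pi) = 1" by (auto simp: G_def)
        have lp: "length pi = Suc n" using d sp Suc.prems by (metis distinct_card)
        then obtain xs a where pxa: "pi = xs @ [a]" by (metis rev_exhaust list.size(3) nat.simps(3))
        have xne: "xs \<noteq> []" using lp pxa False by auto
        have lx: "length xs = n" using lp pxa by simp
        have aS: "a \<in> S" using sp pxa by auto
        have sx: "set xs = S - {a}" using d sp pxa by auto
        have dx: "distinct xs" using d pxa by simp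
        have ab: "{x\<in>set xs. a<x} = {x\<in>S. a<x}" using sx by auto
        have C: "length (sch_P xs) = 1 \<and> (card {x\<in>S. a<x} = 0 \<or> (card {x\<in>S. a<x} = 1 \<and> odd n))"
          using charac[of xs a] d xne l1 pxa ab lx by simp
        show "pi \<in> I1 \<union> I2"
        proof (cases "card {x\<in>S. a<x} = 0")
          case True
          then have "a = M" using rank0[OF fS aS] M_def by simp
          then have "xs \<in> G S'" using dx sx C S'_def by (simp add: G_def)
          then show ?thesis using pxa \<open>a = M\<close> I1_def by auto
        next
          case F: False
          then have c1: "card {x\<in>S. a<x} = 1" and on: "odd n" using C by auto
          have "a = m2" using rank1[OF fS aS c1] M_def S'_def m2_def by simp
          then have "xs \<in> G S''" using dx sx C S''_def by (simp add: G_def)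
          then show ?thesis using pxa \<open>a = m2\<close> I2_def on by auto
        qed
      qed
    next
      show "I1 \<union> I2 \<subseteq> G S"
      proof
        fix pi assume "pi \<in> I1 \<union> I2"
        then show "pi \<in> G S"
        proof
          assume "pi \<in> I1"
          then obtain xs where pxa: "pi = xs @ [M]" and xs: "xs \<in> G S'" using I1_def by auto
          have dx: "distinct xs" and sx: "set xs = S'" and l1: "length (sch_P xs) = 1" using xs by (auto simp: G_def)
          have xne: "xs \<noteq> []" using sx S'ne by auto
          have d: "distinct (xs @ [M])" using dx sx S'_def by simp
          have sp: "set (xs @ [M]) = S" using sx S'_def MS by auto
          have "length (sch_P (xs @ [M])) = 1" using charac[OF d xne] l1 sx above_M by simp
          then show ?thesis using d sp pxa by (simp add: G_def)
        next
          assume "pi \<in> I2"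
          then obtain xs where pxa: "pi = xs @ [m2]" and xs: "xs \<in> G S''" and on: "odd n"
            using I2_def by (auto split: if_splits)
          have dx: "distinct xs" and sx: "set xs = S''" and l1: "length (sch_P xs) = 1" using xs by (auto simp: G_def)
          have lx: "length xs = n" using dx sx cS'' by (metis distinct_card)
          have xne: "xs \<noteq> []" using lx False by auto
          have d: "distinct (xs @ [m2])" using dx sx S''_def by simp
          have sp: "set (xs @ [m2]) = S" using sx S''_def m2S by auto
          have "length (sch_P (xs @ [m2])) = 1" using charac[OF d xne] l1 sx above_m2 lx on by simp
          then show ?thesis using d sp pxa by (simp add: G_def)
        qed
      qed
    qed
    have inj: "\<And>c X. inj_on (\<lambda>xs. xs @ [c]) (X :: nat list set)" by (auto simp: inj_on_def)
    have fin1: "finite I1" using G_finite fS S'_def I1_def by simp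
    have fin2: "finite I2" using G_finite fS S''_def I2_def by simp
    have disj: "I1 \<inter> I2 = {}" using m2M I1_def I2_def by auto
    have c1: "card I1 = 2 ^ (n div 2)" using IH1 I1_def card_image[OF inj] by simp
    have c2: "card I2 = (if odd n then 2 ^ (n div 2) else 0)" using IH2 I2_def card_image[OF inj] by simp
    have "card (G S) = card I1 + card I2" using eq card_Un_disjoint[OF fin1 fin2 disj] by simp
    also have "\<dots> = 2 ^ (Suc n div 2)"
      using c1 c2 by (cases "odd n") (auto simp: odd_iff_mod_2_eq_one div_Suc)
    finally show ?thesis .
  qed
qed

theorem mainTheorem8:
  fixes n :: nat
  assumes "n \<ge> 1"
  shows "card {pi. distinct pi \<and> set pi = {1..n} \<and> length (sch_P pi) = 1} = 2 ^ (n div 2)"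
  using cnt[of "{1..n}" n] assms unfolding G_def by simp

end
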